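(* Let $X=\{x_1,\dots,x_m\}$ and $Y=\{y_1,\dots,y_n\}$ be finite discrete spaces with $m,n>1$, and let $Z=X\circledast Y$. Then $\mathrm{TC}(Z)=n^2$ and $\mathrm{TC}(Z^{\mathrm{op}})=\mathrm{TC}(Y\circledast X)=m^2$.
   Context: Finite $T_0$ spaces are identified with finite posets (open sets are the down-closed sets; $z^\downarrow=\{w:w\le z\}$ is the minimal open neighborhood). The non-Hausdorff join $A\circledast B$ is $A\sqcup B$ with the orders of $A$ and $B$ kept and $a\le b$ for all $a\in A,b\in B$. $Z^{\mathrm{op}}$ is the finite space with the opposite order. Topological complexity is unreduced: $\mathrm{TC}(W)$ is the minimal $k$ such that $W\times W$ is covered by $k$ open sets each admitting a continuous section of $\pi:W^I\to W\times W$, $\gamma\mapsto(\gamma(0),\gamma(1))$, where $W^I$ carries the compact-open topology. *)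

theory Defs
  imports "HOL-Analysis.Analysis" "HOL-Library.Extended_Nat"
begin

text \<open>Finite T0 spaces as finite posets: the open sets are the down-closed subsets
  of the carrier C with respect to the order le.\<close>
definition poset_topology :: "'a set \<Rightarrow> ('a \<Rightarrow> 'a \<Rightarrow> bool) \<Rightarrow> 'a topology" where
  "poset_topology C le = topology (\<lambda>U. U \<subseteq> C \<and> (\<forall>x\<in>U. \<forall>y\<in>C. le y x \<longrightarrow> y \<in> U))"

lemma istopology_poset:
  "istopology (\<lambda>U. U \<subseteq> C \<and> (\<forall>x\<in>U. \<forall>y\<in>C. le y x \<longrightarrow> y \<in> U))"
  unfolding istopology_def by blast

lemma openin_poset_topology:
  "openin (poset_topology C le) U \<longleftrightarrow> U \<subseteq> C \<and> (\<forall>x\<in>U. \<forall>y\<in>C. le y x \<longrightarrow> y \<in> U)"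
  unfolding poset_topology_def using istopology_poset[of C le] by (simp add: topology_inverse')

definition join_le :: "('a \<Rightarrow> 'a \<Rightarrow> bool) \<Rightarrow> ('b \<Rightarrow> 'b \<Rightarrow> bool) \<Rightarrow> 'a + 'b \<Rightarrow> 'a + 'b \<Rightarrow> bool" where
  "join_le leA leB p q = (case (p, q) of
      (Inl a, Inl a') \<Rightarrow> leA a a'
    | (Inr b, Inr b') \<Rightarrow> leB b b'
    | (Inl _, Inr _) \<Rightarrow> True
    | (Inr _, Inl _) \<Rightarrow> False)"

definition discrete_join :: "'a set \<Rightarrow> 'b set \<Rightarrow> ('a + 'b) topology" where
  "discrete_join A B = poset_topology (A <+> B) (join_le (=) (=))"

definition discrete_join_op :: "'a set \<Rightarrow> 'b set \<Rightarrow> ('a + 'b) topology" where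
  "discrete_join_op A B = poset_topology (A <+> B) (\<lambda>p q. join_le (=) (=) q p)"

text \<open>Path space W^I with the compact-open topology. Paths are maps [0,1] -> W,
  made extensional (value undefined outside [0,1]). Subbasis: {g. g ` K \<subseteq> V},
  K compact in [0,1], V open in W.\<close>
definition paths :: "'a topology \<Rightarrow> (real \<Rightarrow> 'a) set" where
  "paths W = {g. pathin W g \<and> (\<forall>t. t \<notin> {0..1} \<longrightarrow> g t = undefined)}"

definition path_space :: "'a topology \<Rightarrow> (real \<Rightarrow> 'a) topology" where
  "path_space W = topology_generated_by
     {{g \<in> paths W. g ` K \<subseteq> V} | K V. compactin (top_of_set {0..1}) K \<and> openin W V}"

definition has_motion_planner :: "'a topology \<Rightarrow> ('a \<times> 'a) set \<Rightarrow> bool" where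
  "has_motion_planner W U \<longleftrightarrow>
     (\<exists>s. continuous_map (subtopology (prod_topology W W) U) (path_space W) s \<and>
          (\<forall>p\<in>U. s p 0 = fst p \<and> s p 1 = snd p))"

text \<open>Unreduced topological complexity (infinity if no finite cover exists).\<close>
definition TC :: "'a topology \<Rightarrow> enat" where
  "TC W = (INF k \<in> {k::nat. \<exists>U::nat \<Rightarrow> ('a \<times> 'a) set.
              (\<forall>i<k. openin (prod_topology W W) (U i) \<and> has_motion_planner W (U i)) \<and>
              topspace (prod_topology W W) \<subseteq> (\<Union>i<k. U i)}. enat k)"

end

theory Submission imports Defs begin

definition lev :: "'c set \<Rightarrow> 'c set \<Rightarrow> 'c \<Rightarrow> 'c \<Rightarrow> bool" where
  "lev L H p q \<longleftrightarrow> p = q \<or> (p \<in> L \<and> q \<in> H)"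

abbreviation WW :: "'c set \<Rightarrow> 'c set \<Rightarrow> 'c topology" where
  "WW L H \<equiv> poset_topology (L \<union> H) (lev L H)"

lemma WW_open: "openin (WW L H) V \<longleftrightarrow> V \<subseteq> L \<union> H \<and> (\<forall>x\<in>V. \<forall>y\<in>L \<union> H. lev L H y x \<longrightarrow> y \<in> V)"
  by (rule openin_poset_topology)

lemma WW_topspace: "topspace (WW L H) = L \<union> H"
proof -
  have "openin (WW L H) (L \<union> H)" unfolding WW_open by auto
  moreover have "\<And>U. openin (WW L H) U \<Longrightarrow> U \<subseteq> L \<union> H" unfolding WW_open by auto
  ultimately show ?thesis unfolding topspace_def by blast
qed

lemma lev_down: "openin (WW L H) V \<Longrightarrow> lev L H y x \<Longrightarrow> x \<in> V \<Longrightarrow> y \<in> V"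
  unfolding WW_open lev_def by auto

definition dn :: "'c set \<Rightarrow> 'c set \<Rightarrow> 'c \<Rightarrow> 'c set" where
  "dn L H z = {w \<in> L \<union> H. lev L H w z}"

lemma dn_open: "L \<inter> H = {} \<Longrightarrow> openin (WW L H) (dn L H z)"
  unfolding WW_open dn_def lev_def by auto

definition locp :: "'c set \<Rightarrow> 'c set \<Rightarrow> (real \<Rightarrow> 'c) \<Rightarrow> bool" where
  "locp L H g \<longleftrightarrow> (\<forall>t\<in>{0..1}. \<exists>e>0. \<forall>s\<in>{0..1}. dist s t < e \<longrightarrow> lev L H (g s) (g t))"

lemma pathin_WW:
  assumes "L \<inter> H = {}"
  shows "pathin (WW L H) g \<longleftrightarrow> g ` {0..1} \<subseteq> L \<union> H \<and> locp L H g"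
proof
  assume p: "pathin (WW L H) g"
  hence img: "g ` {0..1} \<subseteq> L \<union> H"
    unfolding pathin_def continuous_map_def WW_topspace by auto
  have "locp L H g" unfolding locp_def
  proof
    fix t :: real assume t: "t \<in> {0..1}"
    have "openin (top_of_set {0..1}) {x \<in> topspace (top_of_set {0..1}). g x \<in> dn L H (g t)}"
      using p dn_open[OF assms] unfolding pathin_def continuous_map_def by blast
    hence "openin (top_of_set {0..1}) {x \<in> {0..1}. g x \<in> dn L H (g t)}" by simp
    moreover have "t \<in> {x \<in> {0..1}. g x \<in> dn L H (g t)}" using t img unfolding dn_def lev_def by (auto simp: image_subset_iff)
    ultimately obtain e where "e > 0" "\<forall>x'\<in>{0..1}. dist x' t < e \<longrightarrow> x' \<in> {x \<in> {0..1}. g x \<in> dn L H (g t)}"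
      unfolding openin_euclidean_subtopology_iff by blast
    thus "\<exists>e>0. \<forall>s\<in>{0..1}. dist s t < e \<longrightarrow> lev L H (g s) (g t)"
      unfolding dn_def by blast
  qed
  thus "g ` {0..1} \<subseteq> L \<union> H \<and> locp L H g" using img by blast
next
  assume a: "g ` {0..1} \<subseteq> L \<union> H \<and> locp L H g"
  show "pathin (WW L H) g" unfolding pathin_def continuous_map_def
  proof (intro conjI allI impI)
    show "g \<in> topspace (top_of_set {0..1}) \<rightarrow> topspace (WW L H)" using a by (auto simp add: WW_topspace)
    fix V assume V: "openin (WW L H) V"
    show "openin (top_of_set {0..1}) {x \<in> topspace (top_of_set {0..1}). g x \<in> V}"
      unfolding openin_euclidean_subtopology_iff
    proof (intro conjI ballI)
      show "{x \<in> topspace (top_of_set {0..1}). g x \<in> V} \<subseteq> {0..1}" by auto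
      fix t assume t: "t \<in> {x \<in> topspace (top_of_set {0..1}). g x \<in> V}"
      then obtain e where "e > 0" "\<forall>s\<in>{0..1}. dist s t < e \<longrightarrow> lev L H (g s) (g t)"
        using a t unfolding locp_def by force
      thus "\<exists>e>0. \<forall>x'\<in>{0..1::real}. dist x' t < e \<longrightarrow> x' \<in> {x \<in> topspace (top_of_set {0..1}). g x \<in> V}"
        using t lev_down[OF V] by auto
    qed
  qed
qed


lemma lev_L: "L \<inter> H = {} \<Longrightarrow> x \<in> L \<Longrightarrow> lev L H w x \<Longrightarrow> w = x"
  unfolding lev_def by auto
lemma lev_H: "L \<inter> H = {} \<Longrightarrow> y \<in> H \<Longrightarrow> lev L H y w \<Longrightarrow> w = y"
  unfolding lev_def by auto
lemma lev_refl[simp]: "lev L H x x" unfolding lev_def by auto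

lemma locp4:
  assumes "locp L H g1" "locp L H g2" "locp L H a1" "locp L H a2" "u \<in> {0..1}"
  shows "\<exists>e>0. \<forall>s\<in>{0..1}. dist s u < e \<longrightarrow> lev L H (g1 s) (g1 u) \<and> lev L H (g2 s) (g2 u)
            \<and> lev L H (a1 s) (a1 u) \<and> lev L H (a2 s) (a2 u)"
proof -
  obtain e1 where e1: "e1 > 0" "\<forall>s\<in>{0..1}. dist s u < e1 \<longrightarrow> lev L H (g1 s) (g1 u)"
    using assms unfolding locp_def by blast
  obtain e2 where e2: "e2 > 0" "\<forall>s\<in>{0..1}. dist s u < e2 \<longrightarrow> lev L H (g2 s) (g2 u)"
    using assms unfolding locp_def by blast
  obtain e3 where e3: "e3 > 0" "\<forall>s\<in>{0..1}. dist s u < e3 \<longrightarrow> lev L H (a1 s) (a1 u)"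
    using assms unfolding locp_def by blast
  obtain e4 where e4: "e4 > 0" "\<forall>s\<in>{0..1}. dist s u < e4 \<longrightarrow> lev L H (a2 s) (a2 u)"
    using assms unfolding locp_def by blast
  show ?thesis
    apply (rule exI[of _ "min (min e1 e2) (min e3 e4)"])
    using e1 e2 e3 e4 by auto
qed

lemma isolated:
  assumes LH: "L \<inter> H = {}"
  and loc: "locp L H g1" "locp L H g2" "locp L H a1" "locp L H a2"
  and rel: "\<forall>t\<in>{0..1}. lev L H (g1 t) (a1 t) \<and> lev L H (g1 t) (a2 t) \<and> lev L H (g2 t) (a1 t) \<and> lev L H (g2 t) (a2 t)"
  and x: "x1 \<in> L" "x2 \<in> L" "x1 \<noteq> x2" "y1 \<in> H" "y2 \<in> H" "y1 \<noteq> y2"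
  and t0: "t0 \<in> {0..1}" "g1 t0 = x1" "g2 t0 = x2" "a1 t0 = y1" "a2 t0 = y2"
  and t: "t \<in> {0..1}"
  shows "g1 t = x1 \<and> g2 t = x2"
proof -
  define A where "A = {t\<in>{0..1::real}. g1 t = x1 \<and> g2 t = x2 \<and> a1 t = y1 \<and> a2 t = y2}"
  have o1: "openin (top_of_set {0..1}) A" unfolding openin_euclidean_subtopology_iff
  proof (intro conjI ballI)
    show "A \<subseteq> {0..1}" unfolding A_def by auto
    fix u assume u: "u \<in> A"
    have u01: "u \<in> {0..1}" using u unfolding A_def by blast
    obtain e where e: "e > 0" "\<forall>s\<in>{0..1}. dist s u < e \<longrightarrow> lev L H (g1 s) (g1 u) \<and> lev L H (g2 s) (g2 u)
            \<and> lev L H (a1 s) (a1 u) \<and> lev L H (a2 s) (a2 u)"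
      using locp4[OF loc u01] by blast
    have "\<forall>s\<in>{0..1}. dist s u < e \<longrightarrow> s \<in> A"
    proof (intro ballI impI)
      fix s assume s: "s \<in> {0..1::real}" "dist s u < e"
      have gu: "g1 u = x1" "g2 u = x2" "a1 u = y1" "a2 u = y2" using u unfolding A_def by auto
      have "lev L H (g1 s) (g1 u) \<and> lev L H (g2 s) (g2 u) \<and> lev L H (a1 s) (a1 u) \<and> lev L H (a2 s) (a2 u)"
        using e(2) s by blast
      hence l: "lev L H (g1 s) x1" "lev L H (g2 s) x2" "lev L H (a1 s) y1" "lev L H (a2 s) y2"
        unfolding gu by auto
      have g1: "g1 s = x1" using lev_L[OF LH x(1) l(1)] .
      have g2: "g2 s = x2" using lev_L[OF LH x(2) l(2)] .
      have "lev L H (g1 s) (a1 s) \<and> lev L H (g1 s) (a2 s) \<and> lev L H (g2 s) (a1 s) \<and> lev L H (g2 s) (a2 s)"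
        using rel s(1) by blast
      hence r: "lev L H x1 (a1 s)" "lev L H x2 (a1 s)" "lev L H x1 (a2 s)" "lev L H x2 (a2 s)"
        unfolding g1 g2 by auto
      have "a1 s = y1"
      proof (rule ccontr)
        assume "a1 s \<noteq> y1"
        hence "a1 s \<in> L" using l(3) unfolding lev_def by auto
        hence "x1 = a1 s" "x2 = a1 s" using lev_L[OF LH _ r(1)] lev_L[OF LH _ r(2)] by auto
        thus False using x(3) by simp
      qed
      moreover have "a2 s = y2"
      proof (rule ccontr)
        assume "a2 s \<noteq> y2"
        hence "a2 s \<in> L" using l(4) unfolding lev_def by auto
        hence "x1 = a2 s" "x2 = a2 s" using lev_L[OF LH _ r(3)] lev_L[OF LH _ r(4)] by auto
        thus False using x(3) by simp
      qed
      ultimately show "s \<in> A" unfolding A_def using s g1 g2 by auto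
    qed
    thus "\<exists>e>0. \<forall>s\<in>{0..1}. dist s u < e \<longrightarrow> s \<in> A" using e(1) by blast
  qed
  have o2: "openin (top_of_set {0..1}) ({0..1} - A)" unfolding openin_euclidean_subtopology_iff
  proof (intro conjI ballI)
    show "{0..1} - A \<subseteq> {0..1}" by auto
    fix u assume u: "u \<in> {0..1} - A"
    have u01: "u \<in> {0..1}" using u by blast
    obtain e where e: "e > 0" "\<forall>s\<in>{0..1}. dist s u < e \<longrightarrow> lev L H (g1 s) (g1 u) \<and> lev L H (g2 s) (g2 u)
            \<and> lev L H (a1 s) (a1 u) \<and> lev L H (a2 s) (a2 u)"
      using locp4[OF loc u01] by blast
    have "\<forall>s\<in>{0..1}. dist s u < e \<longrightarrow> s \<in> {0..1} - A"
    proof (intro ballI impI)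
      fix s assume s: "s \<in> {0..1::real}" "dist s u < e"
      show "s \<in> {0..1} - A"
      proof
        show "s \<in> {0..1}" using s by simp
        show "s \<notin> A"
        proof
          assume sA: "s \<in> A"
          have gu: "g1 s = x1" "g2 s = x2" "a1 s = y1" "a2 s = y2" using sA unfolding A_def by auto
          have "lev L H (g1 s) (g1 u) \<and> lev L H (g2 s) (g2 u) \<and> lev L H (a1 s) (a1 u) \<and> lev L H (a2 s) (a2 u)"
            using e(2) s by blast
          hence l: "lev L H x1 (g1 u)" "lev L H x2 (g2 u)" "lev L H y1 (a1 u)" "lev L H y2 (a2 u)"
            unfolding gu by auto
          have a1: "a1 u = y1" using lev_H[OF LH x(4) l(3)] .
          have a2: "a2 u = y2" using lev_H[OF LH x(5) l(4)] .
          have "lev L H (g1 u) (a1 u) \<and> lev L H (g1 u) (a2 u) \<and> lev L H (g2 u) (a1 u) \<and> lev L H (g2 u) (a2 u)"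
            using rel u01 by blast
          hence r: "lev L H (g1 u) y1" "lev L H (g1 u) y2" "lev L H (g2 u) y1" "lev L H (g2 u) y2"
            unfolding a1 a2 by auto
          have "g1 u = x1"
          proof (rule ccontr)
            assume "g1 u \<noteq> x1"
            hence "g1 u \<in> H" using l(1) unfolding lev_def by auto
            hence "y1 = g1 u" "y2 = g1 u" using lev_H[OF LH _ r(1)] lev_H[OF LH _ r(2)] by auto
            thus False using x(6) by simp
          qed
          moreover have "g2 u = x2"
          proof (rule ccontr)
            assume "g2 u \<noteq> x2"
            hence "g2 u \<in> H" using l(2) unfolding lev_def by auto
            hence "y1 = g2 u" "y2 = g2 u" using lev_H[OF LH _ r(3)] lev_H[OF LH _ r(4)] by auto
            thus False using x(6) by simp
          qed
          ultimately show False using u a1 a2 unfolding A_def by auto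
        qed
      qed
    qed
    thus "\<exists>e>0. \<forall>s\<in>{0..1}. dist s u < e \<longrightarrow> s \<in> {0..1} - A" using e(1) by blast
  qed
  have Asub: "A \<subseteq> {0..1}" unfolding A_def by blast
  have c: "closedin (top_of_set {0..1}) A"
    using o2 Asub unfolding closedin_def by simp
  have "\<forall>T. openin (top_of_set {0..1::real}) T \<and> closedin (top_of_set {0..1}) T \<longrightarrow> T = {} \<or> T = {0..1}"
    using connected_Icc[of "0::real" 1] unfolding connected_clopen .
  hence "A = {} \<or> A = {0..1}" using o1 c by blast
  moreover have "t0 \<in> A" using t0 unfolding A_def by blast
  ultimately have "A = {0..1}" by blast
  hence "t \<in> A" using t by simp
  thus ?thesis unfolding A_def by blast
qed


lemma prod_open_down:
  assumes "openin (prod_topology (WW L H) (WW L H)) S" "(a,b) \<in> S" "lev L H a' a" "lev L H b' b"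
  shows "(a',b') \<in> S"
proof -
  obtain U V where UV: "openin (WW L H) U" "openin (WW L H) V" "a \<in> U" "b \<in> V" "U \<times> V \<subseteq> S"
  proof -
    have "\<forall>x y. (x,y) \<in> S \<longrightarrow> (\<exists>U V. openin (WW L H) U \<and> openin (WW L H) V \<and> x \<in> U \<and> y \<in> V \<and> U \<times> V \<subseteq> S)"
      using assms(1) by (simp only: openin_prod_topology_alt)
    hence "\<exists>U V. openin (WW L H) U \<and> openin (WW L H) V \<and> a \<in> U \<and> b \<in> V \<and> U \<times> V \<subseteq> S"
      using assms(2) by blast
    thus ?thesis using that by blast
  qed
  have "a' \<in> U" using lev_down[OF UV(1) assms(3) UV(3)] .
  moreover have "b' \<in> V" using lev_down[OF UV(2) assms(4) UV(4)] .
  ultimately have "(a',b') \<in> U \<times> V" by (rule SigmaI)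
  thus ?thesis using UV(5) by (rule subsetD[rotated])
qed

lemma path_space_topspace: "topspace (path_space W) \<subseteq> paths W"
  unfolding path_space_def topology_generated_by_topspace
  by (rule Union_least) auto

lemma paths_WW:
  assumes "L \<inter> H = {}" "g \<in> paths (WW L H)"
  shows "g ` {0..1} \<subseteq> L \<union> H" "locp L H g" "\<And>t. t \<notin> {0..1} \<Longrightarrow> g t = undefined"
proof -
  have p: "pathin (WW L H) g" and e: "\<forall>t. t \<notin> {0..1} \<longrightarrow> g t = undefined"
    using assms(2) unfolding paths_def by blast+
  have "g ` {0..1} \<subseteq> L \<union> H \<and> locp L H g" using p pathin_WW[OF assms(1)] by blast
  thus "g ` {0..1} \<subseteq> L \<union> H" "locp L H g" by blast+
  show "\<And>t. t \<notin> {0..1} \<Longrightarrow> g t = undefined" using e by blast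
qed

lemma section_paths:
  assumes cont: "continuous_map (subtopology (prod_topology (WW L H) (WW L H)) U) (path_space (WW L H)) s"
  and U: "openin (prod_topology (WW L H) (WW L H)) U" and p: "p \<in> U"
  shows "s p \<in> paths (WW L H)"
proof -
  have "p \<in> topspace (subtopology (prod_topology (WW L H) (WW L H)) U)"
    using openin_subset[OF U] p by auto
  hence "s p \<in> topspace (path_space (WW L H))" using cont unfolding continuous_map_def by blast
  thus ?thesis using path_space_topspace by blast
qed

lemma section_mono:
  assumes LH: "L \<inter> H = {}"
  and cont: "continuous_map (subtopology (prod_topology (WW L H) (WW L H)) U) (path_space (WW L H)) s"
  and U: "openin (prod_topology (WW L H) (WW L H)) U" and p: "p \<in> U" and q: "q \<in> U"
  and le: "lev L H (fst p) (fst q)" "lev L H (snd p) (snd q)" and t: "t \<in> {0..1}"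
  shows "lev L H (s p t) (s q t)"
proof -
  define Sb where "Sb = {g \<in> paths (WW L H). g ` {t} \<subseteq> dn L H (s q t)}"
  have "compactin (top_of_set {0..1}) {t}" using t by simp
  hence "Sb \<in> {{g \<in> paths (WW L H). g ` K \<subseteq> V} | K V. compactin (top_of_set {0..1}) K \<and> openin (WW L H) V}"
    unfolding Sb_def using dn_open[OF LH] by blast
  hence "openin (path_space (WW L H)) Sb" unfolding path_space_def by (rule topology_generated_by_Basis)
  hence "openin (subtopology (prod_topology (WW L H) (WW L H)) U)
           {x \<in> topspace (subtopology (prod_topology (WW L H) (WW L H)) U). s x \<in> Sb}"
    using cont unfolding continuous_map_def by blast
  then obtain T where T: "openin (prod_topology (WW L H) (WW L H)) T"
    "{x \<in> topspace (subtopology (prod_topology (WW L H) (WW L H)) U). s x \<in> Sb} = T \<inter> U"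
    unfolding openin_subtopology by blast
  have Usub: "U \<subseteq> topspace (prod_topology (WW L H) (WW L H))" using openin_subset[OF U] .
  have sq: "s q \<in> paths (WW L H)" using section_paths[OF cont U q] .
  have "s q t \<in> L \<union> H" using paths_WW(1)[OF LH sq] t by blast
  hence "s q \<in> Sb" unfolding Sb_def dn_def using sq by auto
  hence "q \<in> T" using T(2) q Usub by auto
  hence "(fst p, snd p) \<in> T" using prod_open_down[OF T(1) _ le] by (metis prod.collapse)
  hence "p \<in> T \<inter> U" using p by simp
  hence "s p \<in> Sb" using T(2) by blast
  thus ?thesis unfolding Sb_def dn_def by blast
qed

lemma key:
  assumes LH: "L \<inter> H = {}" and x: "x1 \<in> L" "x2 \<in> L" "x1 \<noteq> x2"
  and U: "openin (prod_topology (WW L H) (WW L H)) U" and mp: "has_motion_planner (WW L H) U"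
  and y: "y1 \<in> H" "y1' \<in> H" "y2 \<in> H" "y2' \<in> H" and inU: "(y1,y1') \<in> U" "(y2,y2') \<in> U"
  shows "(y1,y1') = (y2,y2')"
proof (rule ccontr)
  assume ne: "(y1,y1') \<noteq> (y2,y2')"
  obtain s where cont: "continuous_map (subtopology (prod_topology (WW L H) (WW L H)) U) (path_space (WW L H)) s"
    and ep: "\<forall>p\<in>U. s p 0 = fst p \<and> s p 1 = snd p"
    using mp unfolding has_motion_planner_def by blast
  have loc: "\<And>p. p \<in> U \<Longrightarrow> locp L H (s p)"
    using paths_WW(2)[OF LH section_paths[OF cont U]] by blast
  have lxy: "\<And>x y. x \<in> L \<Longrightarrow> y \<in> H \<Longrightarrow> lev L H x y" unfolding lev_def by blast
  show False
  proof (cases "y1 = y2")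
    case False
    have P1: "(y1,x1) \<in> U" using prod_open_down[OF U inU(1)] lxy x y by simp
    have P2: "(y2,x1) \<in> U" using prod_open_down[OF U inU(2)] lxy x y by simp
    have Q1: "(x1,x1) \<in> U" using prod_open_down[OF U inU(1)] lxy x y by simp
    have Q2: "(x2,x1) \<in> U" using prod_open_down[OF U inU(1)] lxy x y by simp
    have rel: "\<forall>t\<in>{0..1}. lev L H (s (x1,x1) t) (s (y1,x1) t) \<and> lev L H (s (x1,x1) t) (s (y2,x1) t)
       \<and> lev L H (s (x2,x1) t) (s (y1,x1) t) \<and> lev L H (s (x2,x1) t) (s (y2,x1) t)"
      using section_mono[OF LH cont U] P1 P2 Q1 Q2 lxy x y by simp
    have "s (x1,x1) 1 = x1 \<and> s (x2,x1) 1 = x2"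
      apply (rule isolated[OF LH loc[OF Q1] loc[OF Q2] loc[OF P1] loc[OF P2] rel x y(1) y(3) False, of 0])
      using ep P1 P2 Q1 Q2 by auto
    thus False using ep Q2 x(3) by auto
  next
    case True
    hence F: "y1' \<noteq> y2'" using ne by simp
    have P1: "(x1,y1') \<in> U" using prod_open_down[OF U inU(1)] lxy x y by simp
    have P2: "(x1,y2') \<in> U" using prod_open_down[OF U inU(2)] lxy x y by simp
    have Q1: "(x1,x1) \<in> U" using prod_open_down[OF U inU(1)] lxy x y by simp
    have Q2: "(x1,x2) \<in> U" using prod_open_down[OF U inU(1)] lxy x y by simp
    have rel: "\<forall>t\<in>{0..1}. lev L H (s (x1,x1) t) (s (x1,y1') t) \<and> lev L H (s (x1,x1) t) (s (x1,y2') t)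
       \<and> lev L H (s (x1,x2) t) (s (x1,y1') t) \<and> lev L H (s (x1,x2) t) (s (x1,y2') t)"
      using section_mono[OF LH cont U] P1 P2 Q1 Q2 lxy x y by simp
    have "s (x1,x1) 0 = x1 \<and> s (x1,x2) 0 = x2"
      apply (rule isolated[OF LH loc[OF Q1] loc[OF Q2] loc[OF P1] loc[OF P2] rel x y(2) y(4) F, of 1])
      using ep P1 P2 Q1 Q2 by auto
    thus False using ep Q2 x(3) by auto
  qed
qed


definition pth :: "'c \<Rightarrow> 'c \<Rightarrow> 'c \<Rightarrow> 'c \<Rightarrow> 'c \<Rightarrow> real \<Rightarrow> 'c" where
  "pth x0 y y' a b t = (if t \<in> {0..1} then (if t < 1/4 then a else if t = 1/4 then y
      else if t < 3/4 then x0 else if t = 3/4 then y' else b) else undefined)"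

lemma pth_mono: "lev L H a' a \<Longrightarrow> lev L H b' b \<Longrightarrow> lev L H (pth x0 y y' a' b' t) (pth x0 y y' a b t)"
  unfolding pth_def by auto

lemma pth_img: "a \<in> L \<union> H \<Longrightarrow> b \<in> L \<union> H \<Longrightarrow> x0 \<in> L \<Longrightarrow> y \<in> H \<Longrightarrow> y' \<in> H \<Longrightarrow>
   pth x0 y y' a b ` {0..1} \<subseteq> L \<union> H"
  unfolding pth_def by auto

lemma pth_locp:
  assumes x0: "x0 \<in> L" and y: "y \<in> H" "y' \<in> H" and a: "lev L H a y" and b: "lev L H b y'"
  shows "locp L H (pth x0 y y' a b)"
  unfolding locp_def
proof
  fix t :: real assume t: "t \<in> {0..1}"
  have x0y: "lev L H x0 y" "lev L H x0 y'" using x0 y unfolding lev_def by auto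
  consider "t < 1/4" | "t = 1/4" | "1/4 < t \<and> t < 3/4" | "t = 3/4" | "t > 3/4" by linarith
  thus "\<exists>e>0. \<forall>s\<in>{0..1}. dist s t < e \<longrightarrow> lev L H (pth x0 y y' a b s) (pth x0 y y' a b t)"
  proof cases
    case 1
    show ?thesis
      apply (rule exI[of _ "1/4 - t"]) using 1 t by (auto simp: pth_def dist_real_def)
  next
    case 2
    show ?thesis
      apply (rule exI[of _ "1/2"]) using 2 t a x0y by (auto simp: pth_def dist_real_def)
  next
    case 3
    show ?thesis
      apply (rule exI[of _ "min (t - 1/4) (3/4 - t)"]) using 3 t by (auto simp: pth_def dist_real_def)
  next
    case 4
    show ?thesis
      apply (rule exI[of _ "1/2"]) using 4 t b x0y by (auto simp: pth_def dist_real_def)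
  next
    case 5
    show ?thesis
      apply (rule exI[of _ "t - 3/4"]) using 5 t by (auto simp: pth_def dist_real_def)
  qed
qed


lemma pth_paths:
  assumes LH: "L \<inter> H = {}" and x0: "x0 \<in> L" and y: "y \<in> H" "y' \<in> H"
    and a: "a \<in> dn L H y" and b: "b \<in> dn L H y'"
  shows "pth x0 y y' a b \<in> paths (WW L H)"
proof -
  have a': "a \<in> L \<union> H" "lev L H a y" and b': "b \<in> L \<union> H" "lev L H b y'" using a b unfolding dn_def by auto
  have "pathin (WW L H) (pth x0 y y' a b)"
    unfolding pathin_WW[OF LH] using pth_img[OF a'(1) b'(1) x0 y] pth_locp[OF x0 y a'(2) b'(2)] by blast
  moreover have "\<forall>t. t \<notin> {0..1} \<longrightarrow> pth x0 y y' a b t = undefined" unfolding pth_def by simp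
  ultimately show ?thesis unfolding paths_def by blast
qed

lemma planner:
  assumes LH: "L \<inter> H = {}" and x0: "x0 \<in> L" and y: "y \<in> H" "y' \<in> H"
  shows "has_motion_planner (WW L H) (dn L H y \<times> dn L H y')"
proof -
  define s where "s = (\<lambda>p. pth x0 y y' (fst p) (snd p))"
  let ?U = "dn L H y \<times> dn L H y'"
  let ?P = "prod_topology (WW L H) (WW L H)"
  have Uopen: "openin ?P ?U" using dn_open[OF LH] by (simp add: openin_prod_Times_iff)
  have sp: "\<And>p. p \<in> ?U \<Longrightarrow> s p \<in> paths (WW L H)"
    unfolding s_def using pth_paths[OF LH x0 y] by auto
  have tsub: "topspace (subtopology ?P ?U) = ?U" using openin_subset[OF Uopen] by (auto simp: topspace_subtopology)
  have dnC: "\<And>z. dn L H z \<subseteq> L \<union> H" unfolding dn_def by auto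
  have cont: "continuous_map (subtopology ?P ?U) (path_space (WW L H)) s"
    unfolding path_space_def
  proof (rule continuous_on_generated_topo)
    fix Us assume "Us \<in> {{g \<in> paths (WW L H). g ` K \<subseteq> V} | K V. compactin (top_of_set {0..1}) K \<and> openin (WW L H) V}"
    then obtain K V where Us: "Us = {g \<in> paths (WW L H). g ` K \<subseteq> V}" and V: "openin (WW L H) V" by blast
    define P where "P = s -` Us \<inter> ?U"
    have "openin ?P P" unfolding openin_prod_topology_alt
    proof (intro allI impI)
      fix a b assume ab: "(a,b) \<in> P"
      have abU: "a \<in> dn L H y" "b \<in> dn L H y'" using ab unfolding P_def by auto
      have "dn L H a \<times> dn L H b \<subseteq> P"
      proof
        fix q assume q: "q \<in> dn L H a \<times> dn L H b"
        obtain a' b' where q': "q = (a',b')" by (cases q)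
        have l: "lev L H a' a" "lev L H b' b" using q q' unfolding dn_def by auto
        have a'U: "a' \<in> dn L H y" using lev_down[OF dn_open[OF LH] l(1) abU(1)] .
        have b'U: "b' \<in> dn L H y'" using lev_down[OF dn_open[OF LH] l(2) abU(2)] .
        have "s (a',b') \<in> paths (WW L H)" using sp a'U b'U by simp
        moreover have "s (a',b') ` K \<subseteq> V"
        proof
          fix z assume "z \<in> s (a',b') ` K"
          then obtain t where t: "t \<in> K" "z = s (a',b') t" by blast
          have "s (a,b) t \<in> V" using ab t(1) unfolding P_def Us by auto
          moreover have "lev L H (s (a',b') t) (s (a,b) t)" unfolding s_def using pth_mono[OF l] by simp
          ultimately show "z \<in> V" using lev_down[OF V] t(2) by blast
        qed
        ultimately show "q \<in> P" unfolding P_def Us q' using a'U b'U by simp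
      qed
      moreover have "a \<in> dn L H a" "b \<in> dn L H b" using abU dnC unfolding dn_def by auto
      ultimately show "\<exists>U V. openin (WW L H) U \<and> openin (WW L H) V \<and> a \<in> U \<and> b \<in> V \<and> U \<times> V \<subseteq> P"
        using dn_open[OF LH] by blast
    qed
    hence "openin (subtopology ?P ?U) P" unfolding openin_subtopology P_def by blast
    thus "openin (subtopology ?P ?U) (s -` Us \<inter> topspace (subtopology ?P ?U))"
      unfolding tsub P_def .
  next
    have "paths (WW L H) \<in> {{g \<in> paths (WW L H). g ` K \<subseteq> V} | K V. compactin (top_of_set {0..1}) K \<and> openin (WW L H) V}"
      by (rule CollectI, rule exI[of _ "{}"], rule exI[of _ "{}"]) auto
    thus "s ` topspace (subtopology ?P ?U) \<subseteq> \<Union> {{g \<in> paths (WW L H). g ` K \<subseteq> V} | K V. compactin (top_of_set {0..1}) K \<and> openin (WW L H) V}"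
      unfolding tsub using sp by blast
  qed
  have "\<forall>p\<in>?U. s p 0 = fst p \<and> s p 1 = snd p" unfolding s_def pth_def by simp
  thus ?thesis unfolding has_motion_planner_def using cont by blast
qed


lemma TC_WW:
  fixes L H :: "'c set" and n :: nat
  assumes LH: "L \<inter> H = {}" and L: "finite L" "card L > 1" and H: "finite H" "card H = n" "n > 0"
  shows "TC (WW L H) = enat (n^2)"
proof -
  let ?P = "prod_topology (WW L H) (WW L H)"
  obtain x1 where x1: "x1 \<in> L" using L by (metis card.empty ex_in_conv not_less_zero)
  have "card (L - {x1}) > 0" using L x1 by (simp add: card_Diff_singleton)
  then obtain x2 where x2: "x2 \<in> L" "x2 \<noteq> x1" by (metis Diff_iff card.empty ex_in_conv insertI1 less_irrefl)
  obtain y0 where y0: "y0 \<in> H" using H by (metis card.empty ex_in_conv less_irrefl)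
  define S where "S = {k::nat. \<exists>U::nat \<Rightarrow> ('c \<times> 'c) set.
              (\<forall>i<k. openin ?P (U i) \<and> has_motion_planner (WW L H) (U i)) \<and>
              topspace ?P \<subseteq> (\<Union>i<k. U i)}"
  have TCe: "TC (WW L H) = (INF k\<in>S. enat k)" unfolding TC_def S_def by simp
  have cardHH: "card (H \<times> H) = n^2" using H by (simp add: card_cartesian_product power2_eq_square)
  have up: "n^2 \<in> S"
  proof -
    obtain e where e: "bij_betw e {0..<card (H \<times> H)} (H \<times> H)"
      using ex_bij_betw_nat_finite[of "H \<times> H"] H by blast
    define U where "U = (\<lambda>i. dn L H (fst (e i)) \<times> dn L H (snd (e i)))"
    have eH: "\<And>i. i < n^2 \<Longrightarrow> fst (e i) \<in> H \<and> snd (e i) \<in> H"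
      using e cardHH unfolding bij_betw_def by (metis atLeastLessThan_iff image_eqI mem_Sigma_iff prod.collapse zero_le)
    have "\<forall>i<n^2. openin ?P (U i) \<and> has_motion_planner (WW L H) (U i)"
      unfolding U_def using eH planner[OF LH x1] dn_open[OF LH] by (simp add: openin_prod_Times_iff)
    moreover have "topspace ?P \<subseteq> (\<Union>i<n^2. U i)"
    proof
      fix p assume p: "p \<in> topspace ?P"
      obtain a b where ab: "p = (a,b)" by (cases p)
      have abC: "a \<in> L \<union> H" "b \<in> L \<union> H" using p ab by (auto simp: WW_topspace)
      define ya where "ya = (if a \<in> H then a else y0)"
      define yb where "yb = (if b \<in> H then b else y0)"
      have "(ya,yb) \<in> H \<times> H" using y0 unfolding ya_def yb_def by auto
      then obtain i where i: "i \<in> {0..<n^2}" "e i = (ya,yb)" using e cardHH unfolding bij_betw_def by force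
      have "a \<in> dn L H ya" "b \<in> dn L H yb" using abC y0 unfolding dn_def lev_def ya_def yb_def by auto
      hence "p \<in> U i" unfolding U_def ab using i(2) by simp
      thus "p \<in> (\<Union>i<n^2. U i)" using i(1) by auto
    qed
    ultimately show ?thesis unfolding S_def by blast
  qed
  have low: "\<And>k. k \<in> S \<Longrightarrow> n^2 \<le> k"
  proof -
    fix k assume "k \<in> S"
    then obtain U where U: "\<forall>i<k. openin ?P (U i) \<and> has_motion_planner (WW L H) (U i)"
      "topspace ?P \<subseteq> (\<Union>i<k. U i)" unfolding S_def by blast
    have ex: "\<And>p. p \<in> H \<times> H \<Longrightarrow> \<exists>i. i < k \<and> p \<in> U i"
      using U(2) by (auto simp: WW_topspace)
    define f where "f = (\<lambda>p. SOME i. i < k \<and> p \<in> U i)"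
    have f: "\<And>p. p \<in> H \<times> H \<Longrightarrow> f p < k \<and> p \<in> U (f p)"
    proof -
      fix p assume "p \<in> H \<times> H"
      hence "\<exists>i. i < k \<and> p \<in> U i" by (rule ex)
      hence "(SOME i. i < k \<and> p \<in> U i) < k \<and> p \<in> U (SOME i. i < k \<and> p \<in> U i)" by (rule someI_ex)
      thus "f p < k \<and> p \<in> U (f p)" unfolding f_def .
    qed
    have "inj_on f (H \<times> H)"
    proof (rule inj_onI)
      fix p q assume pq: "p \<in> H \<times> H" "q \<in> H \<times> H" "f p = f q"
      obtain y1 y1' where p: "p = (y1,y1')" by (cases p)
      obtain y2 y2' where q: "q = (y2,y2')" by (cases q)
      have "f p < k" using f pq by blast
      hence Ui: "openin ?P (U (f p))" "has_motion_planner (WW L H) (U (f p))" using U(1) by auto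
      have "p \<in> U (f p)" "q \<in> U (f p)" using f pq by metis+
      thus "p = q" using key[OF LH x2(1) x1 x2(2) Ui] pq unfolding p q by auto
    qed
    moreover have "f ` (H \<times> H) \<subseteq> {..<k}" using f by auto
    ultimately have "card (H \<times> H) \<le> card {..<k}" by (rule card_inj_on_le) simp
    thus "n^2 \<le> k" using cardHH by simp
  qed
  show ?thesis unfolding TCe
  proof (rule antisym)
    show "(INF k\<in>S. enat k) \<le> enat (n^2)" using up by (rule INF_lower)
    show "enat (n^2) \<le> (INF k\<in>S. enat k)" using low by (auto intro: INF_greatest)
  qed
qed


lemma conv_WW:
  assumes "C = L \<union> H" "\<forall>p\<in>C. \<forall>q\<in>C. le p q = lev L H p q"
  shows "poset_topology C le = WW L H"
proof (rule topology_eq[THEN iffD2], intro allI)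
  fix U show "openin (poset_topology C le) U = openin (WW L H) U"
    unfolding openin_poset_topology using assms by blast
qed

theorem theorem3:
  fixes X :: "'a set" and Y :: "'b set" and m n :: nat
  assumes "finite X" "card X = m" "m > 1"
      and "finite Y" "card Y = n" "n > 1"
  shows "TC (discrete_join X Y) = enat (n ^ 2)
       \<and> TC (discrete_join_op X Y) = enat (m ^ 2)
       \<and> TC (discrete_join Y X) = enat (m ^ 2)"
proof (intro conjI)
  have cl: "card (Inl ` X :: ('a + 'b) set) = m" "card (Inr ` Y :: ('a + 'b) set) = n"
    "card (Inl ` Y :: ('b + 'a) set) = n" "card (Inr ` X :: ('b + 'a) set) = m"
    using assms by (simp_all add: card_image)
  have "discrete_join X Y = WW (Inl ` X) (Inr ` Y)"
    unfolding discrete_join_def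
    by (rule conv_WW) (auto simp: Plus_def join_le_def lev_def)
  moreover have "TC (WW (Inl ` X :: ('a + 'b) set) (Inr ` Y)) = enat (n^2)"
    by (rule TC_WW) (use assms cl in auto)
  ultimately show "TC (discrete_join X Y) = enat (n ^ 2)" by simp
  have "discrete_join_op X Y = WW (Inr ` Y) (Inl ` X)"
    unfolding discrete_join_op_def
    by (rule conv_WW) (auto simp: Plus_def join_le_def lev_def)
  moreover have "TC (WW (Inr ` Y :: ('a + 'b) set) (Inl ` X)) = enat (m^2)"
    by (rule TC_WW) (use assms cl in auto)
  ultimately show "TC (discrete_join_op X Y) = enat (m ^ 2)" by simp
  have "discrete_join Y X = WW (Inl ` Y) (Inr ` X)"
    unfolding discrete_join_def
    by (rule conv_WW) (auto simp: Plus_def join_le_def lev_def)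
  moreover have "TC (WW (Inl ` Y :: ('b + 'a) set) (Inr ` X)) = enat (m^2)"
    by (rule TC_WW) (use assms cl in auto)
  ultimately show "TC (discrete_join Y X) = enat (m ^ 2)" by simp
qed

end
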